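(* Let $n\ge 4$ and $a$ be positive integers with $2a\le n$. Then $S_{\mathcal{Q}}(K_{a,n-a})\ge S_{\mathcal{Q}}(K_{\lfloor n/2\rfloor,\lceil n/2\rceil})$, with equality if and only if $K_{a,n-a}\cong K_{\lfloor n/2\rfloor,\lceil n/2\rceil}$ (i.e. $a=\lfloor n/2\rfloor$).
   Context: For a connected graph $G$ with vertex set $\{v_1,\dots,v_n\}$: $\mathcal{D}(G)=(d_G(v_i,v_j))$ is the distance matrix, $D_i=\sum_j d_G(v_i,v_j)$, $Tr(G)=\mathrm{diag}(D_1,\dots,D_n)$, $\mathcal{Q}(G)=Tr(G)+\mathcal{D}(G)$, and $S_{\mathcal{Q}}(G)$ is the difference between the largest and the least eigenvalue of $\mathcal{Q}(G)$. $K_{a,b}$ is the complete bipartite graph with parts of sizes $a,b$. *)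

theory Defs
  imports "Jordan_Normal_Form.Char_Poly"
begin

text \<open>A graph on the vertex set {0..<n} is given by an adjacency relation E.
  A walk of length k from u to v.\<close>
definition walk :: "nat \<Rightarrow> (nat \<Rightarrow> nat \<Rightarrow> bool) \<Rightarrow> nat \<Rightarrow> nat \<Rightarrow> nat \<Rightarrow> bool" where
  "walk n E u v k \<longleftrightarrow> (\<exists>p :: nat \<Rightarrow> nat. p 0 = u \<and> p k = v \<and>
      (\<forall>i\<le>k. p i < n) \<and> (\<forall>i<k. E (p i) (p (Suc i))))"

text \<open>Graph distance d_G(u,v): length of a shortest walk (the graph is connected).\<close>
definition gdist :: "nat \<Rightarrow> (nat \<Rightarrow> nat \<Rightarrow> bool) \<Rightarrow> nat \<Rightarrow> nat \<Rightarrow> nat" where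
  "gdist n E u v = (LEAST k. walk n E u v k)"

definition dist_mat :: "nat \<Rightarrow> (nat \<Rightarrow> nat \<Rightarrow> bool) \<Rightarrow> real mat" where
  "dist_mat n E = mat n n (\<lambda>(i, j). real (gdist n E i j))"

definition trans_mat :: "nat \<Rightarrow> (nat \<Rightarrow> nat \<Rightarrow> bool) \<Rightarrow> real mat" where
  "trans_mat n E = mat n n (\<lambda>(i, j). if i = j then (\<Sum>k<n. real (gdist n E i k)) else 0)"

definition Q_mat :: "nat \<Rightarrow> (nat \<Rightarrow> nat \<Rightarrow> bool) \<Rightarrow> real mat" where
  "Q_mat n E = trans_mat n E + dist_mat n E"

definition SQ :: "nat \<Rightarrow> (nat \<Rightarrow> nat \<Rightarrow> bool) \<Rightarrow> real" where
  "SQ n E = Max {x. eigenvalue (Q_mat n E) x} - Min {x. eigenvalue (Q_mat n E) x}"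

definition Kbip :: "nat \<Rightarrow> nat \<Rightarrow> nat \<Rightarrow> nat \<Rightarrow> bool" where
  "Kbip a b i j \<longleftrightarrow> i < a+b \<and> j < a+b \<and> ((i < a) \<noteq> (j < a))"

end

theory Submission
  imports Defs
begin

definition dK :: "nat \<Rightarrow> nat \<Rightarrow> nat \<Rightarrow> nat" where
  "dK a i j = (if i = j then 0 else if (i<a) = (j<a) then 2 else 1)"

lemma Kbip_iff: "a \<le> n \<Longrightarrow> Kbip a (n-a) i j \<longleftrightarrow> i < n \<and> j < n \<and> (i<a) \<noteq> (j<a)"
  by (auto simp: Kbip_def)

lemma walk0: "walk n E u v 0 \<Longrightarrow> u = v"
  by (auto simp: walk_def)

lemma walk1: "walk n E u v (Suc 0) \<Longrightarrow> E u v"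
  unfolding walk_def by (metis One_nat_def lessI)

lemma gdist_K: assumes "1 \<le> a" "a < n" "i < n" "j < n"
  shows "gdist n (Kbip a (n-a)) i j = dK a i j"
proof -
  let ?E = "Kbip a (n-a)"
  show ?thesis
  proof (cases "i = j")
    case True
    have "walk n ?E i j 0" unfolding walk_def using True assms by (intro exI[of _ "\<lambda>_. i"]) auto
    then show ?thesis unfolding gdist_def dK_def using True by (intro Least_equality) auto
  next
    case ne: False
    show ?thesis
    proof (cases "(i<a) = (j<a)")
      case False
      have "walk n ?E i j 1" unfolding walk_def using False assms
        by (intro exI[of _ "\<lambda>k. if k = 0 then i else j"]) (auto simp: Kbip_iff)
      moreover have "\<not> walk n ?E i j 0" using ne walk0 by blast
      ultimately show ?thesis unfolding gdist_def dK_def using ne False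
        by (intro Least_equality) (auto simp: not_le less_Suc_eq_0_disj intro: ccontr)
    next
      case True
      define w where "w = (if i < a then a else 0)"
      have "walk n ?E i j 2" unfolding walk_def using True assms
        by (intro exI[of _ "\<lambda>k. if k = 0 then i else if k = 1 then w else j"])
           (auto simp: Kbip_iff w_def less_Suc_eq numeral_2_eq_2)
      moreover have "\<not> walk n ?E i j 0" using ne walk0 by blast
      moreover have "\<not> walk n ?E i j 1" using True walk1[of n ?E i j] assms by (auto simp: Kbip_iff)
      ultimately show ?thesis unfolding gdist_def dK_def using ne True
        apply (intro Least_equality) apply simp
        by (metis One_nat_def less_2_cases not_le)
    qed
  qed
qed


lemma sum_dK: assumes "a \<le> n" "i < n"
  shows "(\<Sum>j<n. real (dK a i j) * w j) =
     (if i < a then 2*(\<Sum>j<a. w j) + (\<Sum>j\<in>{a..<n}. w j) else (\<Sum>j<a. w j) + 2*(\<Sum>j\<in>{a..<n}. w j)) - 2 * w i"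
proof -
  have "(\<Sum>j<n. real (dK a i j) * w j) = (\<Sum>j<n. (if (i<a) = (j<a) then 2 else 1) * w j - (if i = j then 2 * w j else 0))"
    by (rule sum.cong) (auto simp: dK_def)
  also have "\<dots> = (\<Sum>j<n. (if (i<a) = (j<a) then 2 else 1) * w j) - 2 * w i"
    using assms by (simp add: sum_subtractf)
  also have "(\<Sum>j<n. (if (i<a) = (j<a) then 2 else 1) * w j) =
     (\<Sum>j<a. (if (i<a) = (j<a) then 2 else 1) * w j) + (\<Sum>j\<in>{a..<n}. (if (i<a) = (j<a) then 2 else 1) * w j)"
    unfolding lessThan_atLeast0 by (rule sum.atLeastLessThan_concat[symmetric]) (use assms in auto)
  also have "(\<Sum>j<a. (if (i<a) = (j<a) then 2 else 1) * w j) = (if i < a then 2 else 1) * (\<Sum>j<a. w j)"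
    by (subst sum_distrib_left) (rule sum.cong, auto)
  also have "(\<Sum>j\<in>{a..<n}. (if (i<a) = (j<a) then 2 else 1) * w j) = (if i < a then 1 else 2) * (\<Sum>j\<in>{a..<n}. w j)"
    by (subst sum_distrib_left) (rule sum.cong, auto)
  finally show ?thesis by simp
qed

lemma Q_dims[simp]: "dim_row (Q_mat n E) = n" "dim_col (Q_mat n E) = n"
  by (simp_all add: Q_mat_def trans_mat_def dist_mat_def)

lemma Q_entry: "i < n \<Longrightarrow> j < n \<Longrightarrow> Q_mat n E $$ (i,j) =
   (if i = j then (\<Sum>k<n. real (gdist n E i k)) else 0) + real (gdist n E i j)"
  by (simp add: Q_mat_def trans_mat_def dist_mat_def)

lemma Qv_sum: "v \<in> carrier_vec n \<Longrightarrow> i < n \<Longrightarrow> (Q_mat n E *\<^sub>v v) $ i = (\<Sum>j<n. Q_mat n E $$ (i,j) * v$j)"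
  by (auto simp: scalar_prod_def lessThan_atLeast0 intro!: sum.cong)

lemma Qv: assumes "1 \<le> a" "a < n" "v \<in> carrier_vec n" "i < n"
  shows "(Q_mat n (Kbip a (n-a)) *\<^sub>v v) $ i =
    (if i < a then (real n + real a - 4) * v$i + 2*(\<Sum>j<a. v$j) + (\<Sum>j\<in>{a..<n}. v$j)
     else (2*real n - real a - 4) * v$i + (\<Sum>j<a. v$j) + 2*(\<Sum>j\<in>{a..<n}. v$j))"
proof -
  let ?Q = "Q_mat n (Kbip a (n-a))"
  have dimv: "dim_vec v = n" using assms by auto
  have "(?Q *\<^sub>v v) $ i = (\<Sum>j<n. ?Q $$ (i,j) * v$j)"
    using assms by (intro Qv_sum)
  also have "\<dots> = (\<Sum>j<n. (if i = j then (\<Sum>k<n. real (dK a i k) * 1) else 0) * v$j + real (dK a i j) * v$j)"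
    by (rule sum.cong) (use assms in \<open>auto simp: Q_entry gdist_K algebra_simps\<close>)
  also have "\<dots> = (\<Sum>k<n. real (dK a i k) * 1) * v$i + (\<Sum>j<n. real (dK a i j) * v$j)"
    using assms by (simp add: sum.distrib if_distrib[where f="\<lambda>x. x * _"] cong: if_cong)
  finally show ?thesis
    unfolding sum_dK[OF less_imp_le[OF assms(2)] assms(4)] using assms
    by (simp add: of_nat_diff algebra_simps)
qed


lemma eig_cases:
  assumes a1: "1 \<le> a" and an: "a < n" and ev: "eigenvalue (Q_mat n (Kbip a (n-a))) x"
  shows "(x - (real n + real a - 4) - 2*real a) * (x - (2*real n - real a - 4) - 2*(real n - real a)) = real a * (real n - real a)
     \<or> x = 2*real n - real a - 4 \<or> (x = real n + real a - 4 \<and> a \<ge> 2)"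
proof -
  let ?Q = "Q_mat n (Kbip a (n-a))"
  obtain v where v: "v \<in> carrier_vec n" "v \<noteq> 0\<^sub>v n" "?Q *\<^sub>v v = x \<cdot>\<^sub>v v"
    using ev unfolding eigenvalue_def eigenvector_def by auto
  define SA where "SA = (\<Sum>j<a. v$j)"
  define SB where "SB = (\<Sum>j\<in>{a..<n}. v$j)"
  define p where "p = x - (real n + real a - 4)"
  define q where "q = x - (2*real n - real a - 4)"
  have ev_i: "(?Q *\<^sub>v v) $ i = x * v$i" if "i < n" for i
    using v that by simp
  have hA: "p * v$i = 2*SA + SB" if "i < a" for i
    using ev_i[of i] Qv[OF a1 an v(1), of i] that an unfolding p_def SA_def SB_def
    by (simp add: algebra_simps)
  have hB: "q * v$i = SA + 2*SB" if "a \<le> i" "i < n" for i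
    using ev_i[of i] Qv[OF a1 an v(1), of i] that unfolding q_def SA_def SB_def
    by (simp add: algebra_simps)
  have sumA: "p * SA = real a * (2*SA + SB)"
  proof -
    have "p * SA = (\<Sum>j<a. p * v$j)" by (simp add: SA_def sum_distrib_left)
    also have "\<dots> = (\<Sum>j<a. 2*SA + SB)" using hA by (intro sum.cong) auto
    also have "\<dots> = real a * (2*SA + SB)" by simp
    finally show ?thesis .
  qed
  have sumB: "q * SB = (real n - real a) * (SA + 2*SB)"
  proof -
    have "q * SB = (\<Sum>j\<in>{a..<n}. q * v$j)" by (simp add: SB_def sum_distrib_left)
    also have "\<dots> = (\<Sum>j\<in>{a..<n}. SA + 2*SB)" using hB by (intro sum.cong) auto
    also have "\<dots> = (real n - real a) * (SA + 2*SB)" using an by (simp add: of_nat_diff)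
    finally show ?thesis .
  qed
  have A0: "real a > 0" using a1 by simp
  have B0: "real n - real a > 0" using an by simp
  show ?thesis
  proof (cases "SA \<noteq> 0 \<and> SB \<noteq> 0")
    case True
    have e1: "(p - 2*real a) * SA = real a * SB" using sumA by (simp add: algebra_simps)
    have e2: "(q - 2*(real n - real a)) * SB = (real n - real a) * SA" using sumB by (simp add: algebra_simps)
    have "((p - 2*real a) * (q - 2*(real n - real a))) * (SA * SB) = (real a * (real n - real a)) * (SA * SB)"
    proof -
      have "((p - 2*real a) * (q - 2*(real n - real a))) * (SA * SB) = ((p - 2*real a) * SA) * ((q - 2*(real n - real a)) * SB)"
        by (simp add: algebra_simps)
      also have "\<dots> = (real a * SB) * ((real n - real a) * SA)" using e1 e2 by simp
      finally show ?thesis by (simp add: algebra_simps)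
    qed
    then have "(p - 2*real a) * (q - 2*(real n - real a)) = real a * (real n - real a)"
      using True by simp
    then show ?thesis unfolding p_def q_def by simp
  next
    case False
    have "SA = 0 \<and> SB = 0"
    proof (cases "SA = 0")
      case True
      then have "real a * SB = 0" using sumA by simp
      then show ?thesis using True A0 by simp
    next
      case f: False
      then have "SB = 0" using False by simp
      then have "(real n - real a) * SA = 0" using sumB by simp
      then show ?thesis using f B0 by simp
    qed
    then have S0: "SA = 0" "SB = 0" by auto
    obtain k where k: "k < n" "v$k \<noteq> 0"
      using v(1,2) by (metis carrier_vecD eq_vecI index_zero_vec(1,2))
    show ?thesis
    proof (cases "k < a")
      case True
      have "p = 0" using hA[OF True] S0 k by simp
      moreover have "a \<ge> 2"
      proof (rule ccontr)
        assume "\<not> a \<ge> 2"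
        then have "a = 1" using a1 by simp
        then have "SA = v$0" unfolding SA_def by simp
        moreover have "k = 0" using True \<open>a = 1\<close> by simp
        ultimately show False using S0 k by simp
      qed
      ultimately show ?thesis unfolding p_def by simp
    next
      case False
      have "q = 0" using hB[of k] False S0 k by simp
      then show ?thesis unfolding q_def by simp
    qed
  qed
qed


lemma sum_vec_lt: "a \<le> n \<Longrightarrow> (\<Sum>j<a. vec n f $ j) = (\<Sum>j<a. f j)"
  by (intro sum.cong) auto

lemma sum_vec_ge: "(\<Sum>j\<in>{a..<n}. vec n f $ j) = (\<Sum>j\<in>{a..<n}. f j)"
  by (intro sum.cong) auto

lemma eig_alpha:
  assumes a2: "2 \<le> a" and an: "a < n"
  shows "eigenvalue (Q_mat n (Kbip a (n-a))) (real n + real a - 4)"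
proof -
  define v :: "real vec" where "v = vec n (\<lambda>i. if i = 0 then 1 else if i = 1 then -1 else 0)"
  have vc: "v \<in> carrier_vec n" by (simp add: v_def)
  have SA: "(\<Sum>j<a. v$j) = 0"
  proof -
    have "(\<Sum>j<a. v$j) = (\<Sum>j<a. (if j = 0 then 1 else if j = 1 then -1 else 0 :: real))"
      unfolding v_def using an by (intro sum_vec_lt) simp
    also have "\<dots> = (\<Sum>j<a. (if j = 0 then 1 else 0) + (if j = 1 then -1 else 0 :: real))"
      by (intro sum.cong) auto
    also have "\<dots> = 0" using a2 by (simp add: sum.distrib)
    finally show ?thesis .
  qed
  have SB: "(\<Sum>j\<in>{a..<n}. v$j) = 0"
    unfolding v_def sum_vec_ge using a2 by (intro sum.neutral) auto
  have nz: "v \<noteq> 0\<^sub>v n"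
  proof
    assume "v = 0\<^sub>v n"
    then have "v $ 0 = 0" using an by simp
    then show False using an by (simp add: v_def)
  qed
  have "Q_mat n (Kbip a (n-a)) *\<^sub>v v = (real n + real a - 4) \<cdot>\<^sub>v v"
  proof (rule eq_vecI)
    fix i assume "i < dim_vec ((real n + real a - 4) \<cdot>\<^sub>v v)"
    then have i: "i < n" using vc by simp
    show "(Q_mat n (Kbip a (n-a)) *\<^sub>v v) $ i = ((real n + real a - 4) \<cdot>\<^sub>v v) $ i"
    proof -
      have a1: "1 \<le> a" using a2 by simp
      have "(Q_mat n (Kbip a (n-a)) *\<^sub>v v) $ i = (if i < a then (real n + real a - 4) * v$i else (2*real n - real a - 4) * v$i)"
        using Qv[OF a1 an vc i] SA SB by simp
      then show ?thesis using a2 i by (simp add: v_def)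
    qed
  qed (use vc in simp)
  then show ?thesis unfolding eigenvalue_def eigenvector_def using vc nz by auto
qed

lemma eig_quad:
  assumes a1: "1 \<le> a" and an: "a < n"
    and qd: "(x - (real n + real a - 4) - 2*real a) * (x - (2*real n - real a - 4) - 2*(real n - real a)) = real a * (real n - real a)"
  shows "eigenvalue (Q_mat n (Kbip a (n-a))) x"
proof -
  define t where "t = x - (real n + real a - 4) - 2*real a"
  define v :: "real vec" where "v = vec n (\<lambda>i. if i < a then real n - real a else t)"
  have vc: "v \<in> carrier_vec n" by (simp add: v_def)
  have SA: "(\<Sum>j<a. v$j) = real a * (real n - real a)"
    unfolding v_def using an by (simp add: sum_vec_lt)
  have SB: "(\<Sum>j\<in>{a..<n}. v$j) = (real n - real a) * t"
    unfolding v_def sum_vec_ge using an by (simp add: of_nat_diff)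
  have nz: "v \<noteq> 0\<^sub>v n"
  proof
    assume "v = 0\<^sub>v n"
    then have "v $ 0 = 0" using an by simp
    then show False using an a1 by (simp add: v_def)
  qed
  have qd': "t * (x - (2*real n - real a - 4) - 2*(real n - real a)) = real a * (real n - real a)"
    using qd unfolding t_def .
  have "Q_mat n (Kbip a (n-a)) *\<^sub>v v = x \<cdot>\<^sub>v v"
  proof (rule eq_vecI)
    fix i assume "i < dim_vec (x \<cdot>\<^sub>v v)"
    then have i: "i < n" using vc by simp
    show "(Q_mat n (Kbip a (n-a)) *\<^sub>v v) $ i = (x \<cdot>\<^sub>v v) $ i"
    proof (cases "i < a")
      case True
      then show ?thesis unfolding Qv[OF a1 an vc i] SA SB using i
        by (simp add: v_def t_def algebra_simps)
    next
      case False
      have "(2*real n - real a - 4) * t + real a * (real n - real a) + 2 * ((real n - real a) * t) = x * t"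
        using qd' by (simp add: algebra_simps)
      then show ?thesis unfolding Qv[OF a1 an vc i] SA SB using i False
        by (simp add: v_def)
    qed
  qed (use vc in simp)
  then show ?thesis unfolding eigenvalue_def eigenvector_def using vc nz by auto
qed


definition sK :: "nat \<Rightarrow> nat \<Rightarrow> real" where
  "sK n a = sqrt (9*(real n - 2*real a)^2 + 4*real a*(real n - real a))"

lemma quad_iff:
  "(x - (real n + real a - 4) - 2*real a) * (x - (2*real n - real a - 4) - 2*(real n - real a)) = real a * (real n - real a)
   \<longleftrightarrow> (2*x - (5*real n - 8))^2 = 9*(real n - 2*real a)^2 + 4*real a*(real n - real a)"
  by (simp add: power2_eq_square algebra_simps) (auto simp: algebra_simps)

lemma quad_roots:
  assumes "a \<le> n"
  shows "(x - (real n + real a - 4) - 2*real a) * (x - (2*real n - real a - 4) - 2*(real n - real a)) = real a * (real n - real a)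
   \<longleftrightarrow> x = (5*real n - 8 + sK n a)/2 \<or> x = (5*real n - 8 - sK n a)/2"
proof -
  let ?D = "9*(real n - 2*real a)^2 + 4*real a*(real n - real a)"
  have D0: "?D \<ge> 0" using assms by simp
  have s0: "sK n a \<ge> 0" unfolding sK_def using D0 by simp
  have "(2*x - (5*real n - 8))^2 = ?D \<longleftrightarrow> \<bar>2*x - (5*real n - 8)\<bar> = sK n a"
  proof
    assume "(2*x - (5*real n - 8))^2 = ?D"
    then show "\<bar>2*x - (5*real n - 8)\<bar> = sK n a" unfolding sK_def by (metis real_sqrt_abs)
  next
    assume "\<bar>2*x - (5*real n - 8)\<bar> = sK n a"
    then have "(2*x - (5*real n - 8))^2 = (sK n a)^2" by (metis power2_abs)
    then show "(2*x - (5*real n - 8))^2 = ?D" unfolding sK_def using D0 by simp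
  qed
  also have "\<dots> \<longleftrightarrow> 2*x - (5*real n - 8) = sK n a \<or> 2*x - (5*real n - 8) = - sK n a"
    using s0 by (cases "2*x - (5*real n - 8) \<ge> 0") auto
  also have "\<dots> \<longleftrightarrow> x = (5*real n - 8 + sK n a)/2 \<or> x = (5*real n - 8 - sK n a)/2"
    by (auto simp: field_simps)
  finally show ?thesis unfolding quad_iff .
qed

lemma SQ_K:
  assumes a1: "1 \<le> a" and a2n: "2*a \<le> n" and n4: "4 \<le> n"
  shows "SQ n (Kbip a (n-a)) = (if a = 1 then sK n a else (3*real n - 2*real a + sK n a)/2)"
proof -
  have an: "a < n" using a1 a2n n4 by simp
  have ale: "a \<le> n" using an by simp
  let ?S = "{x. eigenvalue (Q_mat n (Kbip a (n-a))) x}"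
  let ?lp = "(5*real n - 8 + sK n a)/2"
  let ?lm = "(5*real n - 8 - sK n a)/2"
  let ?al = "real n + real a - 4"
  let ?be = "2*real n - real a - 4"
  have s0: "sK n a \<ge> 0" unfolding sK_def using ale by simp
  have sub: "?S \<subseteq> {?lp, ?lm, ?be} \<union> (if a \<ge> 2 then {?al} else {})"
  proof
    fix x assume "x \<in> ?S"
    then have ev: "eigenvalue (Q_mat n (Kbip a (n-a))) x" by simp
    note h = eig_cases[OF a1 an ev]
    note r = quad_roots[OF ale, of x]
    show "x \<in> {?lp, ?lm, ?be} \<union> (if a \<ge> 2 then {?al} else {})"
    proof (cases "2 \<le> a")
      case True
      then show ?thesis using h r by (simp only: if_True) blast
    next
      case False
      then show ?thesis using h r by (simp only: if_False) blast
    qed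
  qed
  have fin: "finite ?S" by (rule finite_subset[OF sub]) auto
  have lp: "?lp \<in> ?S" using eig_quad[OF a1 an] quad_roots[OF ale] by auto
  have lm: "?lm \<in> ?S" using eig_quad[OF a1 an] quad_roots[OF ale] by auto
  have up: "y \<le> ?lp" if "y \<in> ?S" for y
  proof -
    have "y \<in> {?lp, ?lm, ?be} \<union> (if a \<ge> 2 then {?al} else {})" using sub that by blast
    then show ?thesis using s0 ale by (auto split: if_splits)
  qed
  have Max: "Max ?S = ?lp" by (rule Max_eqI[OF fin up lp])
  have D: "sK n a \<le> 3*real n - 2*real a"
  proof -
    have "(3*real n - 2*real a)^2 - (9*(real n - 2*real a)^2 + 4*real a*(real n - real a)) = 4*real a*(5*real n - 7*real a)"
      by (simp add: power2_eq_square algebra_simps)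
    moreover have "4*real a*(5*real n - 7*real a) \<ge> 0" using a2n by simp
    moreover have "3*real n - 2*real a \<ge> 0" using a2n by simp
    ultimately show ?thesis unfolding sK_def by (intro real_le_lsqrt) linarith+
  qed
  show ?thesis
  proof (cases "a = 1")
    case True
    have E: "real n + 2 \<le> sK n a"
    proof -
      have "9*(real n - 2*real a)^2 + 4*real a*(real n - real a) - (real n + 2)^2 = 4*(2*real n - 7)*(real n - 1)"
        using True by (simp add: power2_eq_square algebra_simps)
      moreover have "4*(2*real n - 7)*(real n - 1) \<ge> 0" using n4 by simp
      ultimately show ?thesis unfolding sK_def by (intro real_le_rsqrt) linarith
    qed
    have lo: "?lm \<le> y" if "y \<in> ?S" for y
    proof -
      have "y \<in> {?lp, ?lm, ?be}" using sub that True by auto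
      then show ?thesis using s0 E True by auto
    qed
    have mn: "Min ?S = ?lm" by (rule Min_eqI[OF fin lo lm])
    show ?thesis unfolding SQ_def Max mn using True by (simp add: field_simps)
  next
    case False
    then have a2: "a \<ge> 2" using a1 by simp
    have al: "?al \<in> ?S" using eig_alpha[OF a2 an] by simp
    have lo: "?al \<le> y" if "y \<in> ?S" for y
    proof -
      have "y \<in> {?lp, ?lm, ?be, ?al}" using sub that a2 by auto
      then show ?thesis using s0 D a2n by auto
    qed
    have mn: "Min ?S = ?al" by (rule Min_eqI[OF fin lo al])
    show ?thesis unfolding SQ_def Max mn using False by (simp add: field_simps)
  qed
qed


lemma diff4_lt: "(x::real) - y = c/4 \<Longrightarrow> c > 0 \<Longrightarrow> y < x" by simp

lemma strict_dec:
  assumes a1: "1 \<le> a" and am: "a < n div 2" and n4: "4 \<le> n"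
  shows "SQ n (Kbip a (n-a)) > SQ n (Kbip (n div 2) (n - n div 2))"
proof -
  define m where "m = n div 2"
  have m2: "m \<ge> 2" using n4 unfolding m_def by simp
  have mn: "2*m \<le> n" unfolding m_def by simp
  have a2n: "2*a \<le> n" using am unfolding m_def[symmetric] using mn by simp
  have SQm: "SQ n (Kbip m (n-m)) = (3*real n - 2*real m + sK n m)/2"
    using SQ_K[OF _ mn n4] m2 by simp
  have SQa: "SQ n (Kbip a (n-a)) = (if a = 1 then sK n a else (3*real n - 2*real a + sK n a)/2)"
    using SQ_K[OF a1 a2n n4] .
  have am': "a < m" using am m_def by simp
  show ?thesis
    unfolding m_def[symmetric] SQm SQa
  proof (cases "a = 1")
    case False
    have "sK n m < sK n a" unfolding sK_def real_sqrt_less_iff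
    proof -
      have "(9*(real n - 2*real a)^2 + 4*real a*(real n - real a)) - (9*(real n - 2*real m)^2 + 4*real m*(real n - real m))
           = 32*(real m - real a)*(real n - real a - real m)"
        by (simp add: power2_eq_square algebra_simps)
      moreover have "32*(real m - real a)*(real n - real a - real m) > 0"
        using am' mn by simp
      ultimately show "9*(real n - 2*real m)^2 + 4*real m*(real n - real m) < 9*(real n - 2*real a)^2 + 4*real a*(real n - real a)"
        by linarith
    qed
    then show "(if a = 1 then sK n a else (3*real n - 2*real a + sK n a)/2) > (3*real n - 2*real m + sK n m)/2"
      using False am' by simp
  next
    case True
    have s1: "sK n a = sqrt (9*(real n - 2)^2 + 4*(real n - 1))" unfolding sK_def using True by simp
    have "sK n a > (3*real n - 2*real m + sK n m)/2"
    proof (cases "even n")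
      case True
      then have nm: "real n = 2*real m" unfolding m_def by (metis even_two_times_div_two of_nat_mult of_nat_numeral)
      have sm: "sK n m = real n" unfolding sK_def nm by (simp add: power2_eq_square algebra_simps real_sqrt_mult)
      have "3*real n / 2 < sK n a" unfolding s1
      proof (rule real_less_rsqrt)
        have "(9*(real n - 2)^2 + 4*(real n - 1)) - (3*real n/2)^2 = (27*(real n - 4)^2 + 88*(real n - 4) + 48)/4"
          by (simp add: power2_eq_square algebra_simps)
        moreover have "27*(real n - 4)^2 + 88*(real n - 4) + 48 > 0" proof -
          have "real n \<ge> 4" using n4 by simp
          then show ?thesis using zero_le_power2[of "real n - 4"] by (smt (verit))
        qed
        ultimately show "(3*real n/2)^2 < 9*(real n - 2)^2 + 4*(real n - 1)" by (rule diff4_lt)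
      qed
      then show ?thesis using sm nm by simp
    next
      case False
      then have nm: "real n = 2*real m + 1" unfolding m_def
        by (metis odd_two_times_div_two_succ of_nat_Suc of_nat_mult of_nat_numeral Suc_eq_plus1 add.commute)
      have n5: "real n \<ge> 5" using n4 False by (cases "n = 4") auto
      have sm: "sK n m \<le> real n + 1" unfolding sK_def
      proof (rule real_le_lsqrt)
        show "0 \<le> real n + 1" by simp
        have "(real n + 1)^2 - (9*(real n - 2*real m)^2 + 4*real m*(real n - real m)) = 2*real n - 7"
          unfolding nm by (simp add: power2_eq_square algebra_simps)
        then show "9*(real n - 2*real m)^2 + 4*real m*(real n - real m) \<le> (real n + 1)^2" using n5 by linarith
      qed
      have "(3*real n + 2)/2 < sK n a" unfolding s1
      proof (rule real_less_rsqrt)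
        have "(9*(real n - 2)^2 + 4*(real n - 1)) - ((3*real n + 2)/2)^2 = (27*(real n - 5)^2 + 130*(real n - 5) + 99)/4"
          by (simp add: power2_eq_square algebra_simps)
        moreover have "27*(real n - 5)^2 + 130*(real n - 5) + 99 > 0" using n5 zero_le_power2[of "real n - 5"] by (smt (verit))
        ultimately show "((3*real n + 2)/2)^2 < 9*(real n - 2)^2 + 4*(real n - 1)" by (rule diff4_lt)
      qed
      then show ?thesis using sm nm by simp
    qed
    then show "(if a = 1 then sK n a else (3*real n - 2*real a + sK n a)/2) > (3*real n - 2*real m + sK n m)/2"
      using True by simp
  qed
qed

theorem lemma4p3:
  fixes n a :: nat
  assumes "n \<ge> 4" and "a \<ge> 1" and "2 * a \<le> n"
  shows "SQ n (Kbip a (n - a)) \<ge> SQ n (Kbip (n div 2) (n - n div 2))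
         \<and> (SQ n (Kbip a (n - a)) = SQ n (Kbip (n div 2) (n - n div 2)) \<longleftrightarrow> a = n div 2)"
proof (cases "a = n div 2")
  case True
  then show ?thesis by simp
next
  case False
  then have "a < n div 2" using assms(3) by linarith
  from strict_dec[OF assms(2) this assms(1)] show ?thesis using False by simp
qed

end
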